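(* Let $t$ be a positive integer and $n=2t+1$. Then the locating chromatic number of the friendship graph $Fr_n$ is $1+\min\{k\in\mathbb{N}: t\le\binom{k}{2}\}$.
   Context: All graphs are finite and simple. The friendship graph $Fr_n$, $n=2t+1$, is the join of $K_1$ with $t$ disjoint copies of $K_2$, i.e. one central vertex adjacent to all vertices of $t$ disjoint edges. A proper $k$-coloring of $G$ is a map from $V(G)$ onto $[k]=\{1,\dots,k\}$ with adjacent vertices receiving different colors. For a connected graph $G$ with proper $k$-coloring $f$ and color classes $V_i=f^{-1}(i)$, the color code of $v$ is $(d(v,V_1),\dots,d(v,V_k))$, where $d(v,S)=\min_{x\in S}d(v,x)$; $f$ is a locating coloring if distinct vertices have distinct color codes, and the locating chromatic number $\chi_L(G)$ is the minimum number of colors in a locating coloring. *)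

theory Defs
  imports Main
begin

definition simple_graph :: "'a set \<Rightarrow> ('a \<times> 'a) set \<Rightarrow> bool" where
  "simple_graph V E \<longleftrightarrow> finite V \<and> E \<subseteq> V \<times> V \<and> sym E \<and> irrefl E"

definition connected_graph :: "'a set \<Rightarrow> ('a \<times> 'a) set \<Rightarrow> bool" where
  "connected_graph V E \<longleftrightarrow> V \<noteq> {} \<and> (\<forall>u\<in>V. \<forall>v\<in>V. \<exists>n. (u, v) \<in> E ^^ n)"

definition gdist :: "('a \<times> 'a) set \<Rightarrow> 'a \<Rightarrow> 'a \<Rightarrow> nat" where
  "gdist E u v = (LEAST n. (u, v) \<in> E ^^ n)"

definition setdist :: "('a \<times> 'a) set \<Rightarrow> 'a \<Rightarrow> 'a set \<Rightarrow> nat" where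
  "setdist E v S = Min ((\<lambda>x. gdist E v x) ` S)"

definition proper_coloring :: "'a set \<Rightarrow> ('a \<times> 'a) set \<Rightarrow> nat \<Rightarrow> ('a \<Rightarrow> nat) \<Rightarrow> bool" where
  "proper_coloring V E k f \<longleftrightarrow> f ` V = {1..k} \<and> (\<forall>(u, v)\<in>E. f u \<noteq> f v)"

definition color_code :: "'a set \<Rightarrow> ('a \<times> 'a) set \<Rightarrow> nat \<Rightarrow> ('a \<Rightarrow> nat) \<Rightarrow> 'a \<Rightarrow> nat list" where
  "color_code V E k f v = map (\<lambda>i. setdist E v {x\<in>V. f x = i}) [1..<k+1]"

definition locating_coloring :: "'a set \<Rightarrow> ('a \<times> 'a) set \<Rightarrow> nat \<Rightarrow> ('a \<Rightarrow> nat) \<Rightarrow> bool" where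
  "locating_coloring V E k f \<longleftrightarrow> proper_coloring V E k f \<and> inj_on (color_code V E k f) V"

definition locating_chromatic_number :: "'a set \<Rightarrow> ('a \<times> 'a) set \<Rightarrow> nat" where
  "locating_chromatic_number V E = (LEAST k. \<exists>f. locating_coloring V E k f)"

text \<open>Friendship graph Fr_n, n = 2t+1: center 0, edges {2i-1, 2i} for i = 1..t.\<close>
definition fr_V :: "nat \<Rightarrow> nat set" where
  "fr_V t = {0..2*t}"

definition fr_E :: "nat \<Rightarrow> (nat \<times> nat) set" where
  "fr_E t = {(0, i) | i. i \<in> {1..2*t}} \<union> {(i, 0) | i. i \<in> {1..2*t}}
          \<union> {(2*i-1, 2*i) | i. i \<in> {1..t}} \<union> {(2*i, 2*i-1) | i. i \<in> {1..t}}"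

end

theory Submission
  imports Defs
begin

definition partner :: "nat \<Rightarrow> nat" where
  "partner p = (if odd p then p + 1 else p - 1)"

lemma fr_E_iff: "(u,v) \<in> fr_E t \<longleftrightarrow>
   (u = 0 \<and> v \<in> {1..2*t}) \<or> (v = 0 \<and> u \<in> {1..2*t}) \<or> (u \<in> {1..2*t} \<and> v = partner u)"
proof
  assume "(u,v) \<in> fr_E t"
  then show "(u = 0 \<and> v \<in> {1..2*t}) \<or> (v = 0 \<and> u \<in> {1..2*t}) \<or> (u \<in> {1..2*t} \<and> v = partner u)"
    unfolding fr_E_def partner_def by (auto; presburger)
next
  assume h: "(u = 0 \<and> v \<in> {1..2*t}) \<or> (v = 0 \<and> u \<in> {1..2*t}) \<or> (u \<in> {1..2*t} \<and> v = partner u)"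
  show "(u,v) \<in> fr_E t"
  proof (cases "u \<in> {1..2*t} \<and> v = partner u")
    case True
    show ?thesis
    proof (cases "odd u")
      case o: True
      define i where "i = (u+1) div 2"
      have "u = 2*i-1" "v = 2*i" "1 \<le> i \<and> i \<le> t" using True o unfolding i_def partner_def atLeastAtMost_iff
        by presburger+
      then show ?thesis unfolding fr_E_def by auto
    next
      case e: False
      define i where "i = u div 2"
      have "v = 2*i-1" "u = 2*i" "1 \<le> i \<and> i \<le> t" using True e unfolding i_def partner_def atLeastAtMost_iff
        by presburger+
      then show ?thesis unfolding fr_E_def by auto
    qed
  next
    case False
    then show ?thesis using h unfolding fr_E_def by auto
  qed
qed

lemma partner_props: assumes "p \<in> {1..2*t}"
  shows "partner p \<in> {1..2*t}" "partner p \<noteq> p" "partner (partner p) = p" "partner p \<noteq> 0"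
  using assms unfolding partner_def atLeastAtMost_iff by presburger+

lemma fr_irrefl: "(u,u) \<notin> fr_E t"
  using partner_props(2)[of u t] by (auto simp: fr_E_iff)

lemma fr_sym: "(u,v) \<in> fr_E t \<Longrightarrow> (v,u) \<in> fr_E t"
  using partner_props[of u t] partner_props[of v t] by (auto simp: fr_E_iff)

lemma fr_sub: "(u,v) \<in> fr_E t \<Longrightarrow> u \<in> fr_V t \<and> v \<in> fr_V t"
  using partner_props[of u t] by (auto simp: fr_E_iff fr_V_def)

lemma gdist_fr: assumes "u \<in> fr_V t" "v \<in> fr_V t"
  shows "gdist (fr_E t) u v = (if u = v then 0 else if (u,v) \<in> fr_E t then 1 else 2)"
proof -
  have E1: "fr_E t ^^ 1 = fr_E t" by simp
  have E2: "fr_E t ^^ 2 = fr_E t O fr_E t" by (simp add: numeral_2_eq_2 relpow_commute)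
  show ?thesis
  proof (cases "u = v")
    case True then show ?thesis unfolding gdist_def by (auto intro!: Least_equality)
  next
    case ne: False
    show ?thesis
    proof (cases "(u,v) \<in> fr_E t")
      case True
      have "\<And>y. (u,v) \<in> fr_E t ^^ y \<Longrightarrow> 1 \<le> y" using ne by (case_tac y) auto
      then show ?thesis using ne True unfolding gdist_def
        by (intro Least_equality) auto
    next
      case False
      have u0: "u \<noteq> 0" "v \<noteq> 0" using False ne assms by (auto simp: fr_E_iff fr_V_def)
      have "(u,0) \<in> fr_E t" "(0,v) \<in> fr_E t" using u0 assms by (auto simp: fr_E_iff fr_V_def)
      then have "(u,v) \<in> fr_E t ^^ 2" unfolding E2 by blast
      moreover have "n < 2 \<Longrightarrow> (u,v) \<notin> fr_E t ^^ n" for n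
        using ne False by (cases n) (auto simp: less_Suc_eq)
      ultimately show ?thesis using ne False unfolding gdist_def
        by (intro Least_equality) (auto simp: not_less[symmetric])
    qed
  qed
qed


lemma finite_frV: "finite (fr_V t)" by (simp add: fr_V_def)

lemma setdist_fr: assumes "v \<in> fr_V t" "S \<subseteq> fr_V t" "S \<noteq> {}"
  shows "setdist (fr_E t) v S = (if v \<in> S then 0 else if \<exists>x\<in>S. (v,x) \<in> fr_E t then 1 else 2)"
proof -
  have fin: "finite S" using assms(2) finite_frV finite_subset by blast
  have g: "\<And>x. x \<in> S \<Longrightarrow> gdist (fr_E t) v x = (if v = x then 0 else if (v,x) \<in> fr_E t then 1 else 2)"
    using gdist_fr assms by blast
  show ?thesis
  proof (cases "v \<in> S")
    case True
    then show ?thesis unfolding setdist_def using fin g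
      by (intro Min_eqI) auto
  next
    case F: False
    show ?thesis
    proof (cases "\<exists>x\<in>S. (v,x) \<in> fr_E t")
      case True
      then obtain x where "x \<in> S" "(v,x) \<in> fr_E t" by blast
      have x1: "gdist (fr_E t) v x = 1" using g[OF \<open>x \<in> S\<close>] \<open>(v,x) \<in> fr_E t\<close> F \<open>x \<in> S\<close> by auto
      have ge: "\<And>y. y \<in> S \<Longrightarrow> 1 \<le> gdist (fr_E t) v y" using g F by fastforce
      have "Min ((\<lambda>x. gdist (fr_E t) v x) ` S) = 1"
        apply (rule Min_eqI)
        using fin ge apply auto[2]
        using x1 \<open>x \<in> S\<close> by (metis image_eqI)
      then show ?thesis unfolding setdist_def using F True by simp
    next
      case False
      then have "\<And>y. y \<in> S \<Longrightarrow> gdist (fr_E t) v y = 2" using g F by fastforce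
      then have "(\<lambda>x. gdist (fr_E t) v x) ` S = {2}" using assms(3) by auto
      then show ?thesis using F False unfolding setdist_def by simp
    qed
  qed
qed

lemma sd_color: assumes "proper_coloring (fr_V t) (fr_E t) k f" "v \<in> fr_V t" "i \<in> {1..k}"
  shows "setdist (fr_E t) v {x\<in>fr_V t. f x = i} =
     (if f v = i then 0 else if \<exists>x\<in>fr_V t. (v,x) \<in> fr_E t \<and> f x = i then 1 else 2)"
proof -
  have "i \<in> f ` fr_V t" using assms(1,3) unfolding proper_coloring_def by blast
  then have "{x\<in>fr_V t. f x = i} \<noteq> {}" by blast
  moreover have "{x\<in>fr_V t. f x = i} \<subseteq> fr_V t" by blast
  ultimately have "setdist (fr_E t) v {x\<in>fr_V t. f x = i} = (if v \<in> {x\<in>fr_V t. f x = i} then 0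
     else if \<exists>x\<in>{x\<in>fr_V t. f x = i}. (v,x) \<in> fr_E t then 1 else 2)"
    using setdist_fr[OF assms(2)] by blast
  moreover have "v \<in> {x\<in>fr_V t. f x = i} \<longleftrightarrow> f v = i" using assms(2) by blast
  moreover have "(\<exists>x\<in>{x\<in>fr_V t. f x = i}. (v,x) \<in> fr_E t) \<longleftrightarrow> (\<exists>x\<in>fr_V t. (v,x) \<in> fr_E t \<and> f x = i)" by blast
  ultimately show ?thesis by (simp only:)
qed

lemma sd_center: assumes "proper_coloring (fr_V t) (fr_E t) k f" "i \<in> {1..k}"
  shows "setdist (fr_E t) 0 {x\<in>fr_V t. f x = i} = (if f 0 = i then 0 else 1)"
proof -
  have z: "0 \<in> fr_V t" by (simp add: fr_V_def)
  have e: "setdist (fr_E t) 0 {x\<in>fr_V t. f x = i} =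
     (if f 0 = i then 0 else if \<exists>x\<in>fr_V t. (0,x) \<in> fr_E t \<and> f x = i then 1 else 2)"
    using sd_color[OF assms(1) z assms(2)] .
  show ?thesis
  proof (cases "f 0 = i")
    case True then show ?thesis using e by simp
  next
    case False
    have "i \<in> f ` fr_V t" using assms unfolding proper_coloring_def by blast
    then obtain x where x: "x \<in> fr_V t" "f x = i" by blast
    then have "x \<noteq> 0" using False by metis
    then have "(0,x) \<in> fr_E t" using x(1) unfolding fr_E_iff fr_V_def by simp
    then have "\<exists>x\<in>fr_V t. (0,x) \<in> fr_E t \<and> f x = i" using x by blast
    then show ?thesis using e False by simp
  qed
qed

lemma nbr_leaf: assumes "p \<in> {1..2*t}"
  shows "(\<exists>x\<in>fr_V t. (p,x) \<in> fr_E t \<and> f x = i) \<longleftrightarrow> f 0 = i \<or> f (partner p) = i"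
proof -
  note pp = partner_props[OF assms]
  have "p \<noteq> 0" using assms by simp
  then have adj: "(p,x) \<in> fr_E t \<longleftrightarrow> x = 0 \<or> x = partner p" for x
    using assms unfolding fr_E_iff by auto
  have "0 \<in> fr_V t" "partner p \<in> fr_V t" using pp(1) by (auto simp: fr_V_def)
  then show ?thesis unfolding adj by auto
qed

lemma sd_leaf: assumes "proper_coloring (fr_V t) (fr_E t) k f" "i \<in> {1..k}" "p \<in> {1..2*t}"
  shows "setdist (fr_E t) p {x\<in>fr_V t. f x = i} =
    (if f p = i then 0 else if f 0 = i \<or> f (partner p) = i then 1 else 2)"
proof -
  have pv: "p \<in> fr_V t" using assms(3) by (auto simp: fr_V_def)
  show ?thesis using sd_color[OF assms(1) pv assms(2)] nbr_leaf[OF assms(3), of f i] by (simp only:)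
qed

lemma code_eq: "color_code V E k f v = color_code V E k f w \<longleftrightarrow>
   (\<forall>i\<in>{1..k}. setdist E v {x\<in>V. f x = i} = setdist E w {x\<in>V. f x = i})"
proof -
  have "set [1..<k+1] = {1..k}" by auto
  then show ?thesis unfolding color_code_def map_eq_conv by simp
qed


lemma lower: assumes "locating_coloring (fr_V t) (fr_E t) k f"
  shows "t \<le> (k - 1) choose 2"
proof -
  let ?V = "fr_V t" and ?E = "fr_E t"
  have pc: "proper_coloring ?V ?E k f" and inj: "inj_on (color_code ?V ?E k f) ?V"
    using assms unfolding locating_coloring_def by auto
  have img: "f ` ?V = {1..k}" and pr: "\<And>u v. (u,v) \<in> ?E \<Longrightarrow> f u \<noteq> f v"
    using pc unfolding proper_coloring_def by auto
  define c where "c = f 0"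
  have c: "c \<in> {1..k}" using img unfolding c_def fr_V_def by auto
  define A where "A = {1..k} - {c}"
  have cardA: "card A = k - 1" using c unfolding A_def by simp
  define h where "h p = (f p, f (partner p))" for p
  define D where "D = (\<lambda>a. (a,a)) ` A"
  have sub: "h ` {1..2*t} \<subseteq> A \<times> A - D"
  proof
    fix y assume "y \<in> h ` {1..2*t}"
    then obtain p where p: "p \<in> {1..2*t}" "y = h p" by blast
    note pp = partner_props[OF p(1)]
    have "f p \<in> {1..k}" "f (partner p) \<in> {1..k}" using img p(1) pp(1) by (auto simp: fr_V_def)
    moreover have "f p \<noteq> c" "f (partner p) \<noteq> c" "f p \<noteq> f (partner p)"
      using pr[of 0 p] pr[of 0 "partner p"] pr[of p "partner p"] p(1) pp(1) unfolding c_def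
      by (auto simp: fr_E_iff)
    ultimately show "y \<in> A \<times> A - D" unfolding p(2) h_def A_def D_def by auto
  qed
  have injh: "inj_on h {1..2*t}"
  proof
    fix p q assume p: "p \<in> {1..2*t}" and q: "q \<in> {1..2*t}" and e: "h p = h q"
    have "\<forall>i\<in>{1..k}. setdist ?E p {x\<in>?V. f x = i} = setdist ?E q {x\<in>?V. f x = i}"
      using e sd_leaf[OF pc _ p] sd_leaf[OF pc _ q] unfolding h_def by auto
    then have "color_code ?V ?E k f p = color_code ?V ?E k f q" using code_eq[of ?V ?E k f p q] by simp
    moreover have "p \<in> ?V" "q \<in> ?V" using p q by (auto simp: fr_V_def)
    ultimately show "p = q" using inj inj_onD by metis
  qed
  have "2 * t = card (h ` {1..2*t})" using card_image[OF injh] by simp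
  also have "\<dots> \<le> card (A \<times> A - D)" using sub by (intro card_mono) (auto simp: A_def)
  also have "\<dots> = card (A \<times> A) - card D" by (intro card_Diff_subset) (auto simp: D_def A_def)
  also have "card D = card A" unfolding D_def by (intro card_image) (auto simp: inj_on_def)
  finally have "2 * t \<le> (k - 1) * (k - 1) - (k - 1)" using cardA by (simp add: card_cartesian_product)
  also have "\<dots> = (k - 1) * (k - 1 - 1)" by (simp add: diff_mult_distrib2)
  finally have "2 * t \<le> (k - 1) * (k - 1 - 1)" .
  then show ?thesis unfolding choose_two by linarith
qed


lemma two_set: fixes X :: "nat set" assumes "card X = 2"
  shows "Min X < Max X" "X = {Min X, Max X}"
proof -
  obtain x y where X: "X = {x,y}" and xy: "x \<noteq> y" using card_2_iff[THEN iffD1, OF assms] by blast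
  have mn: "Min X = min x y" "Max X = max x y" unfolding X by simp_all
  show "Min X < Max X" unfolding mn using xy by linarith
  show "X = {Min X, Max X}" unfolding mn X using xy by (cases "x < y") (auto simp: min_def max_def)
qed

lemma tri_props: assumes "p \<in> {1..2*t}"
  shows "(p+1) div 2 \<in> {1..t}" "(partner p + 1) div 2 = (p+1) div 2" "odd (partner p) \<longleftrightarrow> even p"
proof -
  show "(p+1) div 2 \<in> {1..t}" using assms by auto
  show "(partner p + 1) div 2 = (p+1) div 2"
  proof (cases "odd p")
    case True then obtain k where "p = 2*k+1" by (metis oddE)
    then show ?thesis unfolding partner_def by simp
  next
    case False then obtain k where "p = 2*k" by (metis evenE)
    then show ?thesis unfolding partner_def using assms by (cases k) auto
  qed
  show "odd (partner p) \<longleftrightarrow> even p"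
  proof (cases "odd p")
    case True then obtain k where "p = 2*k+1" by (metis oddE)
    then show ?thesis unfolding partner_def by simp
  next
    case False then obtain k where "p = 2*k" by (metis evenE)
    then show ?thesis unfolding partner_def using assms by (cases k) auto
  qed
qed

definition colf :: "(nat \<Rightarrow> nat set) \<Rightarrow> nat \<Rightarrow> nat" where
  "colf g p = (if p = 0 then 1 else if odd p then Min (g ((p+1) div 2)) else Max (g ((p+1) div 2)))"

lemma upper_g:
  assumes inj: "inj_on g {1..t}"
    and gP: "\<And>i. i \<in> {1..t} \<Longrightarrow> g i \<subseteq> {2..m+1} \<and> card (g i) = 2"
    and cover: "\<And>c. c \<in> {2..m+1} \<Longrightarrow> \<exists>i\<in>{1..t}. c \<in> g i"
  shows "locating_coloring (fr_V t) (fr_E t) (m+1) (colf g)"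
proof -
  let ?V = "fr_V t" and ?E = "fr_E t" and ?f = "colf g"
  have mlt: "\<And>i. i \<in> {1..t} \<Longrightarrow> Min (g i) < Max (g i)" by (rule two_set(1)[OF conjunct2[OF gP]])
  have mset: "\<And>i. i \<in> {1..t} \<Longrightarrow> g i = {Min (g i), Max (g i)}" by (rule two_set(2)[OF conjunct2[OF gP]])
  have mA: "\<And>i. i \<in> {1..t} \<Longrightarrow> Min (g i) \<in> {2..m+1} \<and> Max (g i) \<in> {2..m+1}"
  proof -
    fix i assume i: "i \<in> {1..t}"
    have "Min (g i) \<in> g i" "Max (g i) \<in> g i" using mset[OF i] by (metis insertI1, metis insertI1 insertI2)
    then show "?thesis i" using gP[OF i] by blast
  qed
  have fleaf: "\<And>p. p \<in> {1..2*t} \<Longrightarrow>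
      ?f p = (if odd p then Min (g ((p+1) div 2)) else Max (g ((p+1) div 2))) \<and>
      ?f (partner p) = (if odd p then Max (g ((p+1) div 2)) else Min (g ((p+1) div 2)))"
  proof -
    fix p assume p: "p \<in> {1..2*t}"
    note tp = tri_props[OF p] and pp = partner_props[OF p]
    have "p \<noteq> 0" using p by auto
    have a: "?f p = (if odd p then Min (g ((p+1) div 2)) else Max (g ((p+1) div 2)))"
      unfolding colf_def using \<open>p \<noteq> 0\<close> by simp
    have b: "?f (partner p) = (if odd p then Max (g ((p+1) div 2)) else Min (g ((p+1) div 2)))"
      unfolding colf_def using pp(4) tp(2) tp(3) by simp
    show "?thesis p" using a b by blast
  qed
  have fleaf2: "\<And>p. p \<in> {1..2*t} \<Longrightarrow> ?f p \<in> {2..m+1} \<and> ?f (partner p) \<in> {2..m+1} \<and> ?f p \<noteq> ?f (partner p)"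
  proof -
    fix p assume p: "p \<in> {1..2*t}"
    note i = tri_props(1)[OF p]
    show "?thesis p" using fleaf[OF p] mA[OF i] mlt[OF i] by (cases "odd p") auto
  qed
  have f0: "?f 0 = 1" unfolding colf_def by simp
  have img: "?f ` ?V = {1..m+1}"
  proof
    show "?f ` ?V \<subseteq> {1..m+1}"
    proof
      fix y assume "y \<in> ?f ` ?V"
      then obtain p where p: "p \<in> ?V" "y = ?f p" by blast
      show "y \<in> {1..m+1}"
      proof (cases "p = 0")
        case True then show ?thesis using p f0 by simp
      next
        case False then have "p \<in> {1..2*t}" using p by (auto simp: fr_V_def)
        then show ?thesis using fleaf2 p by fastforce
      qed
    qed
  next
    show "{1..m+1} \<subseteq> ?f ` ?V"
    proof
      fix c assume c: "c \<in> {1..m+1}"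
      show "c \<in> ?f ` ?V"
      proof (cases "c = 1")
        case True then show ?thesis using f0 by (force simp: fr_V_def)
      next
        case False
        then have "c \<in> {2..m+1}" using c by auto
        then obtain i where i: "i \<in> {1..t}" "c \<in> g i" using cover by blast
        show ?thesis
        proof (cases "c = Min (g i)")
          case True
          have q: "2*i-1 \<in> {1..2*t}" "odd (2*i-1)" "(2*i-1+1) div 2 = i" using i(1) unfolding atLeastAtMost_iff by presburger+
          then have "?f (2*i-1) = c" using fleaf[OF q(1)] True by simp
          moreover have "2*i-1 \<in> ?V" using i(1) by (auto simp: fr_V_def)
          ultimately show ?thesis by (metis image_eqI)
        next
          case False
          then have cM: "c = Max (g i)" using mset[OF i(1)] i(2) by blast
          have q: "2*i \<in> {1..2*t}" "\<not> odd (2*i)" "(2*i+1) div 2 = i" using i(1) by auto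
          then have "?f (2*i) = c" using fleaf[OF q(1)] cM by simp
          moreover have "2*i \<in> ?V" using i(1) by (auto simp: fr_V_def)
          ultimately show ?thesis by (metis image_eqI)
        qed
      qed
    qed
  qed
  have proper: "\<forall>(u,v)\<in>?E. ?f u \<noteq> ?f v"
  proof (clarify)
    fix u v assume e: "(u,v) \<in> ?E" and eq: "?f u = ?f v"
    then consider "u = 0" "v \<in> {1..2*t}" | "v = 0" "u \<in> {1..2*t}" | "u \<in> {1..2*t}" "v = partner u"
      by (auto simp: fr_E_iff)
    then show False
    proof cases
      case 1 then show ?thesis using fleaf2[of v] f0 eq by auto
    next
      case 2 then show ?thesis using fleaf2[of u] f0 eq by auto
    next
      case 3 then show ?thesis using fleaf2[of u] eq by auto
    qed
  qed
  have pc: "proper_coloring ?V ?E (m+1) ?f" unfolding proper_coloring_def using img proper by blast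
  have key: "\<And>p q. p \<in> {1..2*t} \<Longrightarrow> q \<in> {1..2*t} \<Longrightarrow> ?f p = ?f q \<Longrightarrow> ?f (partner p) = ?f (partner q) \<Longrightarrow> p = q"
  proof -
    fix p q assume p: "p \<in> {1..2*t}" and q: "q \<in> {1..2*t}" and e1: "?f p = ?f q" and e2: "?f (partner p) = ?f (partner q)"
    define i where "i = (p+1) div 2"
    define j where "j = (q+1) div 2"
    have i: "i \<in> {1..t}" and j: "j \<in> {1..t}" using tri_props p q unfolding i_def j_def by auto
    have fp: "?f p = (if odd p then Min (g i) else Max (g i))" "?f (partner p) = (if odd p then Max (g i) else Min (g i))"
      using fleaf[OF p] unfolding i_def by auto
    have fq: "?f q = (if odd q then Min (g j) else Max (g j))" "?f (partner q) = (if odd q then Max (g j) else Min (g j))"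
      using fleaf[OF q] unfolding j_def by auto
    note li = mlt[OF i] and lj = mlt[OF j]
    show "p = q"
    proof (cases "odd p")
      case op: True
      show ?thesis
      proof (cases "odd q")
        case oq: True
        have "Min (g i) = Min (g j)" "Max (g i) = Max (g j)" using e1 e2 fp fq op oq by auto
        then have "g i = g j" using mset[OF i] mset[OF j] by metis
        then have "i = j" using inj i j inj_onD by metis
        then show ?thesis using op oq unfolding i_def j_def by presburger
      next
        case eq: False
        have "Min (g i) = Max (g j)" "Max (g i) = Min (g j)" using e1 e2 fp fq op eq by auto
        then show ?thesis using li lj by simp
      qed
    next
      case ep: False
      show ?thesis
      proof (cases "odd q")
        case oq: True
        have "Max (g i) = Min (g j)" "Min (g i) = Max (g j)" using e1 e2 fp fq ep oq by auto
        then show ?thesis using li lj by simp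
      next
        case eq: False
        have "Min (g i) = Min (g j)" "Max (g i) = Max (g j)" using e1 e2 fp fq ep eq by auto
        then have "g i = g j" using mset[OF i] mset[OF j] by metis
        then have "i = j" using inj i j inj_onD by metis
        then show ?thesis using ep eq unfolding i_def j_def by presburger
      qed
    qed
  qed
  have injc: "inj_on (color_code ?V ?E (m+1) ?f) ?V"
  proof
    fix p q assume p: "p \<in> ?V" and q: "q \<in> ?V" and ce: "color_code ?V ?E (m+1) ?f p = color_code ?V ?E (m+1) ?f q"
    have sdall: "\<forall>i\<in>{1..m+1}. setdist ?E p {x\<in>?V. ?f x = i} = setdist ?E q {x\<in>?V. ?f x = i}"
      by (rule code_eq[THEN iffD1, OF ce])
    have sd: "setdist ?E p {x\<in>?V. ?f x = i} = setdist ?E q {x\<in>?V. ?f x = i}" if "i \<in> {1..m+1}" for i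
      using sdall that by (rule bspec)
    have one: "(1::nat) \<in> {1..m+1}" by simp
    have leafsd1: "setdist ?E r {x\<in>?V. ?f x = 1} = 1" if r: "r \<in> {1..2*t}" for r
    proof -
      have "?f r \<noteq> 1" using fleaf2[OF r] by auto
      then show ?thesis using sd_leaf[OF pc one r] f0 by simp
    qed
    have s0: "setdist ?E 0 {x\<in>?V. ?f x = 1} = 0" using sd_center[OF pc one] f0 by simp
    show "p = q"
    proof (cases "p = 0")
      case True
      show ?thesis
      proof (rule ccontr)
        assume "p \<noteq> q"
        then have "q \<in> {1..2*t}" using q True by (auto simp: fr_V_def)
        then show False using sd[OF one] True s0 leafsd1 by simp
      qed
    next
      case pn: False
      then have pl: "p \<in> {1..2*t}" using p by (auto simp: fr_V_def)
      show ?thesis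
      proof (cases "q = 0")
        case True then show ?thesis using sd[OF one] s0 leafsd1[OF pl] by simp
      next
        case False
        then have ql: "q \<in> {1..2*t}" using q by (auto simp: fr_V_def)
        have a: "?f p \<in> {1..m+1}" "?f (partner p) \<in> {1..m+1}" using fleaf2[OF pl] by auto
        have b: "?f (partner p) \<noteq> 1" "?f (partner q) \<noteq> 1" using fleaf2[OF pl] fleaf2[OF ql] by auto
        define a where "a = ?f p"
        define b where "b = ?f (partner p)"
        have ab: "a \<noteq> b" "b \<noteq> 1" "?f 0 \<noteq> b" using fleaf2[OF pl] f0 unfolding a_def b_def by auto
        have pa: "setdist ?E p {x\<in>?V. ?f x = a} = 0" using sd_leaf[OF pc a(1) pl] unfolding a_def by simp
        have qa: "setdist ?E q {x\<in>?V. ?f x = a} = 0" using sd[OF a(1)] pa unfolding a_def by metis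
        have e1: "?f q = a"
        proof (rule ccontr)
          assume "?f q \<noteq> a"
          then have "setdist ?E q {x\<in>?V. ?f x = a} \<noteq> 0" using sd_leaf[OF pc a(1) ql] unfolding a_def by simp
          then show False using qa by simp
        qed
        have pb: "setdist ?E p {x\<in>?V. ?f x = b} = 1" using sd_leaf[OF pc a(2) pl] ab unfolding a_def b_def by simp
        have qb: "setdist ?E q {x\<in>?V. ?f x = b} = 1" using sd[OF a(2)] pb unfolding b_def by metis
        have e2: "?f (partner q) = b"
        proof (rule ccontr)
          assume "?f (partner q) \<noteq> b"
          moreover have "?f q \<noteq> b" using e1 ab by simp
          ultimately have "setdist ?E q {x\<in>?V. ?f x = b} = 2" using sd_leaf[OF pc a(2) ql] ab unfolding b_def by simp
          then show False using qb by simp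
        qed
        show ?thesis using key[OF pl ql] e1 e2 unfolding a_def b_def by simp
      qed
    qed
  qed
  show ?thesis unfolding locating_coloring_def using pc injc by blast
qed


lemma exists_g:
  assumes m2: "2 \<le> m" and lo: "(m-1) choose 2 < t" and hi: "t \<le> m choose 2"
  shows "\<exists>g. inj_on g {1..t} \<and> (\<forall>i\<in>{1..t}. g i \<subseteq> {2..m+1} \<and> card (g i) = 2)
              \<and> (\<forall>c\<in>{2..m+1}. \<exists>i\<in>{1..t}. c \<in> g i)"
proof -
  define A where "A = {2..m+1}"
  define P where "P = {S. S \<subseteq> A \<and> card S = 2}"
  have cA: "card A = m" "finite A" unfolding A_def by auto
  have cP: "card P = m choose 2" unfolding P_def using n_subsets[OF cA(2)] cA(1) by simp
  have fP: "finite P" unfolding P_def using cA(2) by auto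
  define path where "path = (\<lambda>j. {j, Suc j}) ` {2..m}"
  have injp: "inj_on (\<lambda>j. {j, Suc j}) {2..m}"
  proof
    fix x y assume "x \<in> {2..m}" "y \<in> {2..m}" "{x, Suc x} = {y, Suc y}"
    then have "Min {x, Suc x} = Min {y, Suc y}" by simp
    then show "x = y" by simp
  qed
  have cpath: "card path = m - 1" unfolding path_def using card_image[OF injp] by simp
  have pathP: "path \<subseteq> P" unfolding path_def P_def A_def by auto
  have mt: "m - 1 \<le> t"
  proof -
    define j where "j = m - 1"
    have lo': "j * (j - 1) div 2 < t" using lo unfolding j_def choose_two .
    show ?thesis
    proof (cases "j \<le> 1")
      case True
      have "1 \<le> t" using lo by linarith
      then show ?thesis using True unfolding j_def by linarith
    next
      case False
      have "2 * (j - 1) \<le> j * (j - 1)" using False by (intro mult_right_mono) auto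
      moreover have "\<And>x y::nat. 2*y \<le> x \<Longrightarrow> y \<le> x div 2" by presburger
      ultimately have "j - 1 \<le> j * (j - 1) div 2" by blast
      then show ?thesis using lo' unfolding j_def by linarith
    qed
  qed
  have "t - (m - 1) \<le> card (P - path)"
    using card_Diff_subset[OF finite_subset[OF pathP fP] pathP] cP cpath hi by simp
  then obtain T where T: "T \<subseteq> P - path" "card T = t - (m - 1)" "finite T"
    by (rule obtain_subset_with_card_n)
  define S where "S = path \<union> T"
  have fpath: "finite path" unfolding path_def by simp
  have cS: "card S = t" unfolding S_def
    using card_Un_disjoint[OF fpath T(3)] T(1) cpath mt T(2) by auto
  have SP: "S \<subseteq> P" unfolding S_def using pathP T(1) by auto
  obtain g where g: "bij_betw g {1..card S} S" using ex_bij_betw_nat_finite_1[of S] S_def fpath T(3) by auto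
  have inj: "inj_on g {1..t}" and gim: "g ` {1..t} = S" using g cS unfolding bij_betw_def by auto
  have gP: "\<forall>i\<in>{1..t}. g i \<subseteq> {2..m+1} \<and> card (g i) = 2"
  proof
    fix i assume "i \<in> {1..t}"
    then have "g i \<in> P" using gim SP by blast
    then show "g i \<subseteq> {2..m+1} \<and> card (g i) = 2" unfolding P_def A_def by blast
  qed
  have cov: "\<forall>c\<in>{2..m+1}. \<exists>i\<in>{1..t}. c \<in> g i"
  proof
    fix c assume c: "c \<in> {2..m+1}"
    have "\<exists>j\<in>{2..m}. c \<in> {j, Suc j}"
    proof (cases "c \<le> m")
      case True then show ?thesis using c by auto
    next
      case False then have "c = Suc m" using c by auto
      then show ?thesis using m2 by (intro bexI[of _ m]) auto
    qed
    then obtain j where j: "j \<in> {2..m}" "c \<in> {j, Suc j}" by blast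
    have "{j, Suc j} \<in> S" unfolding S_def path_def using j(1) by blast
    then obtain i where "i \<in> {1..t}" "g i = {j, Suc j}" using gim by (metis imageE)
    then show "\<exists>i\<in>{1..t}. c \<in> g i" using j(2) by blast
  qed
  show ?thesis using inj gP cov by blast
qed

theorem proposition2:
  fixes t n :: nat
  assumes "t > 0" and "n = 2*t + 1"
  shows "locating_chromatic_number (fr_V t) (fr_E t) = 1 + (LEAST k::nat. t \<le> k choose 2)"
proof -
  define m where "m = (LEAST k::nat. t \<le> k choose 2)"
  have ex: "t \<le> (t+1) choose 2"
  proof -
    have "2 * t \<le> (t+1) * (t+1-1)" using assms(1) by simp
    moreover have "\<And>x y::nat. 2*y \<le> x \<Longrightarrow> y \<le> x div 2" by presburger
    ultimately show ?thesis unfolding choose_two by blast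
  qed
  have hi: "t \<le> m choose 2" unfolding m_def using LeastI[of "\<lambda>k. t \<le> k choose 2", OF ex] .
  have m2: "2 \<le> m"
  proof (rule ccontr)
    assume "\<not> 2 \<le> m"
    then have z: "m choose 2 = 0" by (intro binomial_eq_0) simp
    show False using hi assms(1) z by linarith
  qed
  have lo: "(m-1) choose 2 < t"
  proof -
    have "m - 1 < m" using m2 by simp
    then have "\<not> t \<le> (m-1) choose 2" unfolding m_def by (rule not_less_Least)
    then show ?thesis by simp
  qed
  obtain g where g: "inj_on g {1..t}" "\<forall>i\<in>{1..t}. g i \<subseteq> {2..m+1} \<and> card (g i) = 2"
      "\<forall>c\<in>{2..m+1}. \<exists>i\<in>{1..t}. c \<in> g i"
    using exists_g[OF m2 lo hi] by blast
  have loc: "locating_coloring (fr_V t) (fr_E t) (m+1) (colf g)"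
    by (rule upper_g) (use g in auto)
  have "locating_chromatic_number (fr_V t) (fr_E t) = m + 1"
    unfolding locating_chromatic_number_def
  proof (rule Least_equality)
    show "\<exists>f. locating_coloring (fr_V t) (fr_E t) (m + 1) f" using loc by blast
  next
    fix k assume "\<exists>f. locating_coloring (fr_V t) (fr_E t) k f"
    then obtain f where "locating_coloring (fr_V t) (fr_E t) k f" by blast
    then have tk: "t \<le> (k - 1) choose 2" by (rule lower)
    then have "m \<le> k - 1" unfolding m_def by (rule Least_le)
    moreover have "k \<noteq> 0"
    proof
      assume "k = 0"
      then have "(k - 1) choose 2 = 0" by (intro binomial_eq_0) simp
      then show False using tk assms(1) by linarith
    qed
    ultimately show "m + 1 \<le> k" by linarith
  qed
  then show ?thesis unfolding m_def by simp
qed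

end
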